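(* In every model of $\mathsf{Md}_\bot$ the following conditional equations hold for all elements $x,y$: (1) $x\cdot y=1\rightarrow 0\cdot y=0$; (2) $x\cdot y=1\rightarrow x^{-1}=y$; (3) $0\cdot x=0\cdot y\rightarrow 0\cdot(x\cdot y)=0\cdot x$; (4) $0\cdot x\cdot y=0\rightarrow 0\cdot x=0$; (5) $0\cdot(x+y)=0\rightarrow 0\cdot x=0$; (6) $0\cdot x^{-1}=0\rightarrow 0\cdot x=0$; (7) $0\cdot x=\bot\rightarrow x=\bot$.
   Context: The signature has one sort, constants $0,1,\bot$, binary operations $+,\cdot$ and unary operations $-$ and $(\,\cdot\,)^{-1}$; $^{-1}$ binds stronger than $\cdot$, which binds stronger than $+$. $\mathsf{Md}_\bot$ is the set of equations (variables universally quantified): $(x+y)+z=x+(y+z)$; $x+y=y+x$; $x+0=x$; $x+(-x)=0\cdot x$; $(x\cdot y)\cdot z=x\cdot(y\cdot z)$; $x\cdot y=y\cdot x$; $1\cdot x=x$; $x\cdot(y+z)=x\cdot y+x\cdot z$; $-(-x)=x$; $0\cdot(x\cdot x)=0\cdot x$; $(x^{-1})^{-1}=x+0\cdot x^{-1}$; $x\cdot x^{-1}=1+0\cdot x^{-1}$; $(x\cdot y)^{-1}=x^{-1}\cdot y^{-1}$; $1^{-1}=1$; $0^{-1}=\bot$; $x+\bot=\bot$; $x\cdot\bot=\bot$. *)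

theory Defs
  imports Main
begin

locale md_bot =
  fixes zero :: 'a and one :: 'a and bot :: 'a
    and add :: "'a \<Rightarrow> 'a \<Rightarrow> 'a"
    and mul :: "'a \<Rightarrow> 'a \<Rightarrow> 'a"
    and neg :: "'a \<Rightarrow> 'a"
    and inv :: "'a \<Rightarrow> 'a"
  assumes add_assoc: "\<And>x y z. add (add x y) z = add x (add y z)"
    and add_comm: "\<And>x y. add x y = add y x"
    and add_zero: "\<And>x. add x zero = x"
    and add_neg: "\<And>x. add x (neg x) = mul zero x"
    and mul_assoc: "\<And>x y z. mul (mul x y) z = mul x (mul y z)"
    and mul_comm: "\<And>x y. mul x y = mul y x"
    and one_mul: "\<And>x. mul one x = x"
    and distrib: "\<And>x y z. mul x (add y z) = add (mul x y) (mul x z)"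
    and neg_neg: "\<And>x. neg (neg x) = x"
    and zero_mul_sq: "\<And>x. mul zero (mul x x) = mul zero x"
    and inv_inv: "\<And>x. inv (inv x) = add x (mul zero (inv x))"
    and mul_inv: "\<And>x. mul x (inv x) = add one (mul zero (inv x))"
    and inv_mul: "\<And>x y. inv (mul x y) = mul (inv x) (inv y)"
    and inv_one: "inv one = one"
    and inv_zero: "inv zero = bot"
    and add_bot: "\<And>x. add x bot = bot"
    and mul_bot: "\<And>x. mul x bot = bot"

end

theory Submission
  imports Defs
begin

context md_bot begin
lemma l1: "mul x y = one \<Longrightarrow> mul zero y = zero" by (metis mul_assoc mul_comm one_mul zero_mul_sq)
lemma l3: "mul zero x = mul zero y \<Longrightarrow> mul zero (mul x y) = mul zero x" by (metis mul_assoc zero_mul_sq)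
lemma l7: "mul zero x = bot \<Longrightarrow> x = bot" by (metis one_mul mul_comm local.distrib add_zero add_bot)
lemma l2: "mul x y = one \<Longrightarrow> inv x = y" by (metis (full_types) inv_mul inv_one l1 mul_assoc mul_comm mul_inv one_mul)
lemma l4: "mul (mul zero x) y = zero \<Longrightarrow> mul zero x = zero" by (metis mul_assoc zero_mul_sq mul_comm)
lemma l5: "mul zero (add x y) = zero \<Longrightarrow> mul zero x = zero" by (metis add_assoc add_neg add_zero local.distrib mul_assoc neg_neg)
lemma l6: "mul zero (inv x) = zero \<Longrightarrow> mul zero x = zero" by (metis add_zero l1 mul_comm mul_inv)
end

theorem proposition2p5:
  fixes zero one bot :: 'a
    and add mul :: "'a \<Rightarrow> 'a \<Rightarrow> 'a"
    and neg inv :: "'a \<Rightarrow> 'a"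
  assumes "md_bot zero one bot add mul neg inv"
  shows "(\<forall>x y. mul x y = one \<longrightarrow> mul zero y = zero) \<and>
    (\<forall>x y. mul x y = one \<longrightarrow> inv x = y) \<and>
    (\<forall>x y. mul zero x = mul zero y \<longrightarrow> mul zero (mul x y) = mul zero x) \<and>
    (\<forall>x y. mul (mul zero x) y = zero \<longrightarrow> mul zero x = zero) \<and>
    (\<forall>x y. mul zero (add x y) = zero \<longrightarrow> mul zero x = zero) \<and>
    (\<forall>x. mul zero (inv x) = zero \<longrightarrow> mul zero x = zero) \<and>
    (\<forall>x. mul zero x = bot \<longrightarrow> x = bot)"
  using md_bot.l1[OF assms] md_bot.l2[OF assms] md_bot.l3[OF assms] md_bot.l4[OF assms]
    md_bot.l5[OF assms] md_bot.l6[OF assms] md_bot.l7[OF assms] by blast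

end
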